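(* Fix an integer $\alpha\ge 1$. Then $$\lim_{n\to\infty}\frac{\lambda_{n,\alpha}}{n}=\frac{1}{\alpha}.$$
   Context: All graphs are finite and simple. For a graph $G$, $\lambda(G)$ denotes the spectral radius (largest eigenvalue) of its adjacency matrix, and $\alpha(G)$ denotes its independence number. For integers $n\ge \alpha\ge 1$, $\mathcal{G}_{n,\alpha}$ is the set of all connected graphs of order $n$ with independence number $\alpha$, and $\lambda_{n,\alpha}=\min\{\lambda(G): G\in\mathcal{G}_{n,\alpha}\}$. *)

theory Defs
  imports Complex_Main
begin

definition simple_graph :: "nat \<Rightarrow> (nat \<Rightarrow> nat \<Rightarrow> bool) \<Rightarrow> bool" where
  "simple_graph n E \<longleftrightarrow>
     (\<forall>i j. E i j \<longrightarrow> i < n \<and> j < n) \<and>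
     (\<forall>i j. E i j \<longrightarrow> E j i) \<and>
     (\<forall>i. \<not> E i i)"

definition graph_connected :: "nat \<Rightarrow> (nat \<Rightarrow> nat \<Rightarrow> bool) \<Rightarrow> bool" where
  "graph_connected n E \<longleftrightarrow> n \<ge> 1 \<and> (\<forall>i<n. \<forall>j<n. E\<^sup>*\<^sup>* i j)"

definition independent_set :: "nat \<Rightarrow> (nat \<Rightarrow> nat \<Rightarrow> bool) \<Rightarrow> nat set \<Rightarrow> bool" where
  "independent_set n E S \<longleftrightarrow> S \<subseteq> {0..<n} \<and> (\<forall>i\<in>S. \<forall>j\<in>S. \<not> E i j)"

definition independence_number :: "nat \<Rightarrow> (nat \<Rightarrow> nat \<Rightarrow> bool) \<Rightarrow> nat" where
  "independence_number n E = Max (card ` {S. independent_set n E S})"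

definition adj :: "(nat \<Rightarrow> nat \<Rightarrow> bool) \<Rightarrow> nat \<Rightarrow> nat \<Rightarrow> real" where
  "adj E i j = (if E i j then 1 else 0)"

definition adj_eigenvalue :: "nat \<Rightarrow> (nat \<Rightarrow> nat \<Rightarrow> bool) \<Rightarrow> real \<Rightarrow> bool" where
  "adj_eigenvalue n E \<mu> \<longleftrightarrow>
     (\<exists>v :: nat \<Rightarrow> real. (\<exists>i<n. v i \<noteq> 0) \<and>
        (\<forall>i<n. (\<Sum>j<n. adj E i j * v j) = \<mu> * v i))"

definition spectral_radius_graph :: "nat \<Rightarrow> (nat \<Rightarrow> nat \<Rightarrow> bool) \<Rightarrow> real" where
  "spectral_radius_graph n E = Max {\<mu>. adj_eigenvalue n E \<mu>}"

definition lambda_min :: "nat \<Rightarrow> nat \<Rightarrow> real" where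
  "lambda_min n a = Inf {spectral_radius_graph n E | E.
       simple_graph n E \<and> graph_connected n E \<and> independence_number n E = a}"

end

theory Submission
  imports Defs "HOL-Analysis.Analysis" "Jordan_Normal_Form.Char_Poly"
begin


definition QF :: "nat \<Rightarrow> (nat\<Rightarrow>nat\<Rightarrow>real) \<Rightarrow> (nat\<Rightarrow>real) \<Rightarrow> real" where
  "QF n a x = (\<Sum>i<n. \<Sum>j<n. a i j * x i * x j)"
definition NF :: "nat \<Rightarrow> (nat\<Rightarrow>real) \<Rightarrow> real" where
  "NF n x = (\<Sum>i<n. (x i)^2)"

lemma compact_sphere: "compact {x::nat\<Rightarrow>real. NF n x = 1 \<and> (\<forall>i\<ge>n. x i = 0)}"
proof -
  define P where "P = PiE UNIV (\<lambda>i::nat. if i<n then {-1..1::real} else {0})"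
  have cP: "compact P"
  proof -
    have "compactin (product_topology (\<lambda>i. euclidean) UNIV) P"
      unfolding P_def compactin_PiE by auto
    thus ?thesis by (simp add: euclidean_product_topology)
  qed
  have cl: "closed {x::nat\<Rightarrow>real. NF n x = 1}"
    unfolding NF_def
    by (intro closed_Collect_eq continuous_intros continuous_on_product_coordinates)
  have eq: "{x::nat\<Rightarrow>real. NF n x = 1 \<and> (\<forall>i\<ge>n. x i = 0)} = P \<inter> {x. NF n x = 1}"
  proof (safe)
    fix x :: "nat \<Rightarrow> real" assume h: "NF n x = 1" "\<forall>i\<ge>n. x i = 0"
    show "x \<in> P" unfolding P_def
    proof (simp add: PiE_iff, intro allI conjI impI)
      fix i assume "i < n"
      have "(x i)^2 \<le> NF n x" unfolding NF_def
        using \<open>i<n\<close> by (intro member_le_sum) auto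
      hence "(x i)^2 \<le> 1" using h by simp
      hence "\<bar>x i\<bar> \<le> 1" using abs_square_le_1 by blast
      thus "-1 \<le> x i" "x i \<le> 1" by auto
    next
      fix i assume "\<not> i < n" thus "x i = 0" using h by auto
    qed
  next
    fix x i assume a: "x \<in> P" "n \<le> i"
    hence "x i \<in> (if i<n then {-1..1::real} else {0})" unfolding P_def PiE_iff by blast
    thus "x i = 0" using a(2) by simp
  qed
  show ?thesis unfolding eq using cP cl by (rule compact_Int_closed)
qed

lemma NF_add: "NF n (\<lambda>i. x i + t * w i) = NF n x + 2*t*(\<Sum>i<n. x i * w i) + t^2 * NF n w"
  unfolding NF_def by (simp add: power2_eq_square algebra_simps sum.distrib sum_distrib_left)

lemma QF_add: "QF n a (\<lambda>i. x i + t * w i) = QF n a x + t * (\<Sum>i<n. \<Sum>j<n. a i j * x i * w j)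
   + t * (\<Sum>i<n. \<Sum>j<n. a i j * w i * x j) + t^2 * QF n a w"
  unfolding QF_def by (simp add: power2_eq_square algebra_simps sum.distrib sum_distrib_left)

lemma QF_swap:
  fixes a :: "nat \<Rightarrow> nat \<Rightarrow> real"
  assumes sym: "\<And>i j. a i j = a j i"
  shows "(\<Sum>i<n. \<Sum>j<n. a i j * x i * w j) = (\<Sum>i<n. \<Sum>j<n. a i j * w i * x j)"
proof -
  have "(\<Sum>i<n. \<Sum>j<n. a i j * x i * w j) = (\<Sum>j<n. \<Sum>i<n. a i j * x i * w j)"
    by (rule sum.swap)
  also have "\<dots> = (\<Sum>i<n. \<Sum>j<n. a i j * w i * x j)"
    apply (intro sum.cong refl)
    subgoal for i j using sym[of j i] by (simp only: mult.assoc mult.commute mult.left_commute)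
    done
  finally show ?thesis .
qed

lemma quad_zero:
  fixes W c :: real
  assumes h: "\<And>t. 0 \<le> 2*t*W + t^2*c" and c: "c \<ge> 0"
  shows "W = 0"
proof -
  define t where "t = - W/(c+1)"
  have "0 \<le> 2*t*W + t^2*c" by (rule h)
  hence "0 \<le> (2*t*W + t^2*c) * (c+1)^2" using c by simp
  also have tc: "t*(c+1) = -W" unfolding t_def using c by simp
  have "(2*t*W + t^2*c) * (c+1)^2 = 2*W*(t*(c+1))*(c+1) + (t*(c+1))^2*c"
    by (simp add: power2_eq_square algebra_simps)
  also have "\<dots> = -(W^2 * (c+2))" unfolding tc by (simp add: power2_eq_square algebra_simps)
  finally have "W^2 * (c+2) \<le> 0" by simp
  hence "W^2 \<le> 0" using c by (simp add: mult_le_0_iff)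
  thus ?thesis by simp
qed

lemma cont_coord: "continuous_on S (\<lambda>x::nat\<Rightarrow>real. x i)"
  by (rule continuous_on_subset[OF continuous_on_product_coordinates]) simp

lemma rayleigh_max:
  fixes a :: "nat \<Rightarrow> nat \<Rightarrow> real"
  assumes sym: "\<And>i j. a i j = a j i" and n: "n \<ge> 1"
  shows "\<exists>\<mu> x. (\<exists>i<n. x i \<noteq> 0) \<and> (\<forall>i<n. (\<Sum>j<n. a i j * x j) = \<mu> * x i)
           \<and> (\<forall>y. QF n a y \<le> \<mu> * NF n y)"
proof -
  define K where "K = {x::nat\<Rightarrow>real. NF n x = 1 \<and> (\<forall>i\<ge>n. x i = 0)}"
  have cK: "compact K" unfolding K_def by (rule compact_sphere)
  define e where "e = (\<lambda>i::nat. if i = 0 then 1 else (0::real))"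
  have "(\<Sum>i<n. (e i)^2) = (\<Sum>i<n. if i = 0 then 1 else 0)"
    by (intro sum.cong) (auto simp: e_def)
  hence "NF n e = 1" unfolding NF_def using n by simp
  hence "e \<in> K" unfolding K_def e_def using n by auto
  hence Kne: "K \<noteq> {}" by auto
  have cont: "continuous_on K (QF n a)" unfolding QF_def
    by (intro continuous_intros cont_coord)
  obtain x0 where x0K: "x0 \<in> K" and x0max: "\<And>y. y \<in> K \<Longrightarrow> QF n a y \<le> QF n a x0"
    using continuous_attains_sup[OF cK Kne cont] by blast
  define \<mu> where "\<mu> = QF n a x0"
  have N1: "NF n x0 = 1" using x0K unfolding K_def by auto
  have bound: "QF n a y \<le> \<mu> * NF n y" for y
  proof (cases "NF n y = 0")
    case True
    hence "\<forall>i\<in>{..<n}. (y i)^2 = 0" unfolding NF_def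
      by (subst sum_nonneg_eq_0_iff[symmetric]) auto
    hence "QF n a y = 0" unfolding QF_def by simp
    thus ?thesis using True by simp
  next
    case False
    define s where "s = NF n y"
    have s0: "s > 0" using False unfolding s_def NF_def
      by (metis (no_types, lifting) order_le_less sum_nonneg zero_le_power2)
    define z where "z = (\<lambda>i. if i < n then y i / sqrt s else 0)"
    have "NF n z = (\<Sum>i<n. (y i)^2 / s)" unfolding NF_def z_def
      using s0 by (intro sum.cong) (auto simp: power_divide)
    also have "\<dots> = 1" using s0 unfolding s_def NF_def by (simp add: sum_divide_distrib[symmetric])
    finally have "z \<in> K" unfolding K_def z_def by auto
    hence "QF n a z \<le> \<mu>" using x0max unfolding \<mu>_def by blast
    moreover have "QF n a z = QF n a y / s" unfolding QF_def z_def
      using s0 by (simp add: sum_divide_distrib[symmetric] field_simps)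
    ultimately show ?thesis using s0 unfolding s_def by (simp add: field_simps)
  qed
  define w where "w = (\<lambda>i. \<mu> * x0 i - (\<Sum>j<n. a i j * x0 j))"
  define q where "q = (\<lambda>y. \<mu> * NF n y - QF n a y)"
  have q0: "q y \<ge> 0" for y using bound[of y] unfolding q_def by simp
  have qx0: "q x0 = 0" unfolding q_def \<mu>_def N1 by simp
  have cross: "\<mu> * (2*t*(\<Sum>i<n. x0 i * w i)) - (t * (\<Sum>i<n. \<Sum>j<n. a i j * x0 i * w j)
      + t * (\<Sum>i<n. \<Sum>j<n. a i j * w i * x0 j)) = 2*t*(\<Sum>i<n. w i * w i)" for t
  proof -
    have s1: "(\<Sum>i<n. \<Sum>j<n. a i j * w i * x0 j) = (\<Sum>i<n. w i * (\<Sum>j<n. a i j * x0 j))"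
      by (simp add: sum_distrib_left mult.commute mult.left_commute)
    have hw: "(\<Sum>i<n. w i * w i) = \<mu> * (\<Sum>i<n. x0 i * w i) - (\<Sum>i<n. w i * (\<Sum>j<n. a i j * x0 j))"
    proof -
      have pt: "w i * w i = \<mu> * (x0 i * w i) - w i * (\<Sum>j<n. a i j * x0 j)" for i
        unfolding w_def by (simp add: algebra_simps)
      have "(\<Sum>i<n. w i * w i) = (\<Sum>i<n. \<mu> * (x0 i * w i) - w i * (\<Sum>j<n. a i j * x0 j))"
        by (rule sum.cong[OF refl pt])
      also have "\<dots> = \<mu> * (\<Sum>i<n. x0 i * w i) - (\<Sum>i<n. w i * (\<Sum>j<n. a i j * x0 j))"
        by (simp add: sum_subtractf sum_distrib_left)
      finally show ?thesis .
    qed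
    have sw: "(\<Sum>i<n. \<Sum>j<n. a i j * x0 i * w j) = (\<Sum>i<n. \<Sum>j<n. a i j * w i * x0 j)"
      by (rule QF_swap) (rule sym)
    show ?thesis unfolding sw s1 hw by (simp add: algebra_simps)
  qed
  have expand: "0 \<le> 2*t*(\<Sum>i<n. w i * w i) + t^2 * q w" for t
  proof -
    have "0 \<le> q (\<lambda>i. x0 i + t * w i)" by (rule q0)
    also have "q (\<lambda>i. x0 i + t * w i) = q x0 + 2*t*(\<Sum>i<n. w i * w i) + t^2 * q w"
      unfolding q_def NF_add QF_add using cross[of t] by (simp add: algebra_simps)
    finally show ?thesis using qx0 by simp
  qed
  have W0: "(\<Sum>i<n. w i * w i) = 0" using quad_zero[OF expand q0] .
  hence "\<forall>i\<in>{..<n}. w i * w i = 0" by (subst sum_nonneg_eq_0_iff[symmetric]) auto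
  hence eig: "\<forall>i<n. (\<Sum>j<n. a i j * x0 j) = \<mu> * x0 i" unfolding w_def by auto
  have "\<exists>i<n. x0 i \<noteq> 0"
  proof (rule ccontr)
    assume "\<not> ?thesis"
    hence "NF n x0 = 0" unfolding NF_def by simp
    thus False using N1 by simp
  qed
  thus ?thesis using eig bound by blast
qed

lemma fin_eig: "finite {\<mu>. adj_eigenvalue n E \<mu>}"
proof -
  define A :: "real Matrix.mat" where "A = Matrix.mat n n (\<lambda>(i,j). adj E i j)"
  have A: "A \<in> carrier_mat n n" unfolding A_def by simp
  have nz: "char_poly A \<noteq> 0" using degree_monic_char_poly[OF A] by auto
  have "{\<mu>. adj_eigenvalue n E \<mu>} \<subseteq> {k. poly (char_poly A) k = 0}"
  proof
    fix \<mu> assume "\<mu> \<in> {\<mu>. adj_eigenvalue n E \<mu>}"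
    then obtain x where x: "\<exists>i<n. x i \<noteq> 0" "\<forall>i<n. (\<Sum>j<n. adj E i j * x j) = \<mu> * x i"
      unfolding adj_eigenvalue_def by auto
    define v where "v = vec n x"
    have "eigenvector A v \<mu>" unfolding eigenvector_def
    proof (intro conjI)
      show "v \<in> carrier_vec (dim_row A)" unfolding v_def A_def by simp
      show "v \<noteq> 0\<^sub>v (dim_row A)" using x(1) unfolding v_def A_def
        by (auto simp: vec_eq_iff)
      show "A *\<^sub>v v = \<mu> \<cdot>\<^sub>v v"
      proof (rule eq_vecI)
        fix i assume "i < dim_vec (\<mu> \<cdot>\<^sub>v v)"
        hence i: "i < n" unfolding v_def by simp
        have "(A *\<^sub>v v) $ i = (\<Sum>j<n. adj E i j * x j)"
          unfolding A_def v_def using i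
          by (simp add: scalar_prod_def lessThan_atLeast0)
        thus "(A *\<^sub>v v) $ i = (\<mu> \<cdot>\<^sub>v v) $ i" using x(2) i unfolding v_def by simp
      qed (simp add: A_def v_def)
    qed
    hence "eigenvalue A \<mu>" unfolding eigenvalue_def by blast
    thus "\<mu> \<in> {k. poly (char_poly A) k = 0}" using eigenvalue_root_char_poly[OF A] by simp
  qed
  moreover have "finite {k. poly (char_poly A) k = 0}" using nz by (rule poly_roots_finite)
  ultimately show ?thesis by (rule finite_subset)
qed

lemma adj_sym: "simple_graph n E \<Longrightarrow> adj E i j = adj E j i"
  unfolding simple_graph_def adj_def by metis

lemma spec_facts:
  assumes g: "simple_graph n E" and n: "n \<ge> 1"
  shows "adj_eigenvalue n E (spectral_radius_graph n E)
      \<and> (\<forall>y. QF n (adj E) y \<le> spectral_radius_graph n E * NF n y)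
      \<and> (\<forall>\<mu>'. adj_eigenvalue n E \<mu>' \<longrightarrow> \<mu>' \<le> spectral_radius_graph n E)"
proof -
  obtain \<mu> x where x: "\<exists>i<n. x i \<noteq> 0" "\<forall>i<n. (\<Sum>j<n. adj E i j * x j) = \<mu> * x i"
    and b: "\<forall>y. QF n (adj E) y \<le> \<mu> * NF n y"
    using rayleigh_max[of "adj E" n] adj_sym[OF g] n by blast
  have ev: "adj_eigenvalue n E \<mu>" unfolding adj_eigenvalue_def using x by blast
  have ub: "\<mu>' \<le> \<mu>" if hev: "adj_eigenvalue n E \<mu>'" for \<mu>'
  proof -
    obtain v where v: "\<exists>i<n. v i \<noteq> 0" "\<forall>i<n. (\<Sum>j<n. adj E i j * v j) = \<mu>' * v i"
      using hev unfolding adj_eigenvalue_def by blast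
    have "QF n (adj E) v = (\<Sum>i<n. v i * (\<Sum>j<n. adj E i j * v j))"
      unfolding QF_def by (simp add: sum_distrib_left mult_ac)
    also have "\<dots> = (\<Sum>i<n. \<mu>' * (v i)^2)"
      using v(2) by (intro sum.cong) (auto simp: power2_eq_square)
    also have "\<dots> = \<mu>' * NF n v" unfolding NF_def by (simp add: sum_distrib_left)
    finally have "\<mu>' * NF n v \<le> \<mu> * NF n v" using b by metis
    moreover have "NF n v > 0"
    proof -
      obtain i where "i < n" "v i \<noteq> 0" using v(1) by blast
      hence "0 < (v i)^2" by simp
      also have "(v i)^2 \<le> NF n v" unfolding NF_def using \<open>i<n\<close> by (intro member_le_sum) auto
      finally show ?thesis .
    qed
    ultimately show ?thesis by simp
  qed
  have "spectral_radius_graph n E = \<mu>" unfolding spectral_radius_graph_def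
    by (rule Max_eqI[OF fin_eig]) (use ev ub in auto)
  thus ?thesis using ev ub b by simp
qed



lemma key_ineq:
  fixes a b T k :: real
  assumes k: "k \<ge> 0" and T: "T \<ge> 0" and h: "b^2 \<le> k * T" and b: "b \<ge> 0"
  shows "(a+b)^2 \<le> (k+1) * (a^2 + T)"
proof (cases "k = 0")
  case True
  hence "b = 0" using h b by simp
  thus ?thesis using True T by simp
next
  case False
  hence kp: "k > 0" using k by simp
  have "k * ((k+1) * (a^2 + T) - (a+b)^2) = k*(k+1)*a^2 + (k+1)*(k*T) - k*(a+b)^2"
    by (simp add: algebra_simps)
  also have "\<dots> \<ge> k*(k+1)*a^2 + (k+1)*b^2 - k*(a+b)^2"
    using h k by (simp add: mult_left_mono)
  also have "k*(k+1)*a^2 + (k+1)*b^2 - k*(a+b)^2 = (k*a - b)^2"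
    by (simp add: power2_eq_square algebra_simps)
  finally have "0 \<le> k * ((k+1) * (a^2 + T) - (a+b)^2)"
    by (meson order_trans zero_le_power2)
  hence "0 \<le> (k+1) * (a^2 + T) - (a+b)^2" using kp by (simp add: zero_le_mult_iff)
  thus ?thesis by simp
qed

definition degV :: "(nat \<Rightarrow> nat \<Rightarrow> bool) \<Rightarrow> nat set \<Rightarrow> nat \<Rightarrow> nat" where
  "degV E V i = card {j\<in>V. E i j}"

lemma turan:
  assumes sym: "\<And>i j. E i j \<Longrightarrow> E j i" and irr: "\<And>i. \<not> E i i"
  shows "finite V \<Longrightarrow> (\<forall>S\<subseteq>V. (\<forall>i\<in>S. \<forall>j\<in>S. \<not> E i j) \<longrightarrow> card S \<le> k)
     \<Longrightarrow> real (card V)^2 \<le> real k * (\<Sum>i\<in>V. real (degV E V i) + 1)"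
proof (induction k arbitrary: V)
  case 0
  have "V = {}"
  proof (rule ccontr)
    assume "V \<noteq> {}"
    then obtain v where "v \<in> V" by blast
    hence "card {v} \<le> 0" using 0(2) irr by (metis empty_subsetI insert_subset singletonD)
    thus False by simp
  qed
  thus ?case by simp
next
  case (Suc k)
  note fin = Suc.prems(1)
  show ?case
  proof (cases "V = {}")
    case True thus ?thesis by simp
  next
    case False
    have fi: "finite (degV E V ` V)" using fin by simp
    obtain v where vV: "v \<in> V" and vmin: "degV E V v = Min (degV E V ` V)"
      using Min_in[OF fi] False by (metis (no_types, lifting) image_iff image_is_empty)
    have vle: "degV E V v \<le> degV E V u" if "u \<in> V" for u
      using vmin Min_le[OF fi] that by simp
    define N where "N = {j\<in>V. E v j}"
    define D where "D = insert v N"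
    define V' where "V' = V - D"
    have DV: "D \<subseteq> V" unfolding D_def N_def using vV by auto
    have finN: "finite N" unfolding N_def using fin by simp
    have vN: "v \<notin> N" unfolding N_def using irr by auto
    have cardD: "card D = degV E V v + 1" unfolding D_def degV_def N_def[symmetric]
      using finN vN by simp
    have finV': "finite V'" unfolding V'_def using fin by simp
    have indep': "\<forall>S\<subseteq>V'. (\<forall>i\<in>S. \<forall>j\<in>S. \<not> E i j) \<longrightarrow> card S \<le> k"
    proof (intro allI impI)
      fix S assume SV: "S \<subseteq> V'" and ind: "\<forall>i\<in>S. \<forall>j\<in>S. \<not> E i j"
      have vS: "v \<notin> S" using SV unfolding V'_def D_def by auto
      have nb: "\<not> E v j" if "j \<in> S" for j using that SV unfolding V'_def D_def N_def by auto
      have "insert v S \<subseteq> V" using SV vV unfolding V'_def by auto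
      moreover have "\<forall>i\<in>insert v S. \<forall>j\<in>insert v S. \<not> E i j"
        using ind nb irr sym by blast
      ultimately have "card (insert v S) \<le> Suc k" using Suc.prems(2) by blast
      moreover have "finite S" using SV finV' finite_subset by blast
      ultimately show "card S \<le> k" using vS by simp
    qed
    define T where "T = (\<Sum>i\<in>V'. real (degV E V' i) + 1)"
    have IH: "real (card V')^2 \<le> real k * T" unfolding T_def using Suc.IH[OF finV' indep'] .
    have T0: "T \<ge> 0" unfolding T_def by (intro sum_nonneg) auto
    have split: "(\<Sum>i\<in>V. real (degV E V i) + 1) = (\<Sum>i\<in>D. real (degV E V i) + 1) + (\<Sum>i\<in>V'. real (degV E V i) + 1)"
      unfolding V'_def using sum.subset_diff[OF DV fin, of "\<lambda>i. real (degV E V i) + 1"] by simp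
    have s1: "(\<Sum>i\<in>D. real (degV E V i) + 1) \<ge> real (card D)^2"
    proof -
      have "(\<Sum>i\<in>D. real (degV E V i) + 1) \<ge> (\<Sum>i\<in>D. real (degV E V v) + 1)"
        using DV vle by (intro sum_mono) auto
      also have "(\<Sum>i\<in>D. real (degV E V v) + 1) = real (card D)^2"
        using cardD by (simp add: power2_eq_square)
      finally show ?thesis .
    qed
    have s2: "(\<Sum>i\<in>V'. real (degV E V i) + 1) \<ge> T"
      unfolding T_def
    proof (intro sum_mono)
      fix i assume "i \<in> V'"
      have "degV E V' i \<le> degV E V i" unfolding degV_def
        using fin V'_def by (intro card_mono) auto
      thus "real (degV E V' i) + 1 \<le> real (degV E V i) + 1" by simp
    qed
    have cV: "card V = card D + card V'"
      unfolding V'_def using card_Diff_subset[OF finite_subset[OF DV fin] DV] card_mono[OF fin DV] by simp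
    have "real (card V)^2 = (real (card D) + real (card V'))^2" using cV by simp
    also have "\<dots> \<le> (real k + 1) * (real (card D)^2 + T)"
      by (rule key_ineq) (use T0 IH in auto)
    also have "\<dots> \<le> (real k + 1) * (\<Sum>i\<in>V. real (degV E V i) + 1)"
      using split s1 s2 by (intro mult_left_mono) auto
    finally show ?thesis by (simp add: add.commute)
  qed
qed



lemma sum_adj: "(\<Sum>j<n. adj E i j) = real (card {j. j < n \<and> E i j})"
proof -
  have "(\<Sum>j<n. adj E i j) = (\<Sum>j\<in>{..<n}. if E i j then 1 else 0)"
    unfolding adj_def by simp
  also have "\<dots> = (\<Sum>j\<in>{j\<in>{..<n}. E i j}. 1)"
    by (rule sum.inter_filter[symmetric]) simp
  also have "{j\<in>{..<n}. E i j} = {j. j < n \<and> E i j}" by auto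
  finally show ?thesis by simp
qed

lemma indep_le:
  assumes "independent_set n E S"
  shows "card S \<le> independence_number n E"
proof -
  have "{S. independent_set n E S} \<subseteq> Pow {0..<n}" unfolding independent_set_def by auto
  hence "finite {S. independent_set n E S}" by (rule finite_subset) simp
  thus ?thesis unfolding independence_number_def using assms by (intro Max_ge) auto
qed

lemma lower:
  assumes g: "simple_graph n E" and n: "n \<ge> 1" and ind: "independence_number n E = a" and a: "a \<ge> 1"
  shows "spectral_radius_graph n E \<ge> real n / real a - 1"
proof -
  have sym: "\<And>i j. E i j \<Longrightarrow> E j i" and irr: "\<And>i. \<not> E i i" using g unfolding simple_graph_def by auto
  have hyp: "\<forall>S\<subseteq>{0..<n}. (\<forall>i\<in>S. \<forall>j\<in>S. \<not> E i j) \<longrightarrow> card S \<le> a"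
    using indep_le ind unfolding independent_set_def by blast
  have T: "real (card {0..<n})^2 \<le> real a * (\<Sum>i\<in>{0..<n}. real (degV E {0..<n} i) + 1)"
    using turan[OF sym irr _ hyp] by blast
  define s where "s = (\<Sum>i\<in>{0..<n}. real (degV E {0..<n} i))"
  have T': "real n ^2 \<le> real a * (s + real n)" using T unfolding s_def by (simp add: sum.distrib)
  have Q1: "QF n (adj E) (\<lambda>_. 1) = s"
    unfolding QF_def s_def degV_def by (simp add: sum_adj atLeast0LessThan)
  have N1: "NF n (\<lambda>_. 1) = real n" unfolding NF_def by simp
  have "s \<le> spectral_radius_graph n E * real n"
    using spec_facts[OF g n] Q1 N1 by metis
  moreover have "real n / real a - 1 \<le> s / real n"
  proof -
    have ap: "real a > 0" using a by simp
    have np: "real n > 0" using n by simp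
    have "real n * real n \<le> real a * (s + real n)" using T' by (simp add: power2_eq_square)
    hence "real n / real a \<le> (s + real n) / real n" using ap np by (simp add: field_simps)
    also have "\<dots> = s / real n + 1" using np by (simp add: field_simps)
    finally show ?thesis by simp
  qed
  moreover have "s / real n \<le> spectral_radius_graph n E"
  proof -
    have "real n > 0" using n by simp
    thus ?thesis using calculation(1) by (simp add: divide_le_eq mult.commute)
  qed
  ultimately show ?thesis by linarith
qed

lemma eig_le_deg:
  assumes ev: "adj_eigenvalue n E \<mu>" and D: "\<And>i. i < n \<Longrightarrow> real (card {j. j < n \<and> E i j}) \<le> D"
  shows "\<mu> \<le> D"
proof -
  obtain v where v: "\<exists>i<n. v i \<noteq> 0" "\<forall>i<n. (\<Sum>j<n. adj E i j * v j) = \<mu> * v i"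
    using ev unfolding adj_eigenvalue_def by blast
  have ne: "(\<lambda>i. \<bar>v i\<bar>) ` {..<n} \<noteq> {}" using v(1) by auto
  define M where "M = Max ((\<lambda>i. \<bar>v i\<bar>) ` {..<n})"
  obtain i where i: "i < n" "\<bar>v i\<bar> = M" using Max_in[OF _ ne] unfolding M_def by auto
  have Mge: "\<bar>v j\<bar> \<le> M" if "j < n" for j unfolding M_def using that by (intro Max_ge) auto
  have Mp: "M > 0"
  proof -
    obtain j where "j < n" "v j \<noteq> 0" using v(1) by blast
    thus ?thesis using Mge[of j] by simp
  qed
  have "\<bar>\<mu>\<bar> * M = \<bar>\<Sum>j<n. adj E i j * v j\<bar>" using v(2) i by (simp add: abs_mult)
  also have "\<dots> \<le> (\<Sum>j<n. \<bar>adj E i j * v j\<bar>)" by (rule sum_abs)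
  also have "\<dots> \<le> (\<Sum>j<n. adj E i j * M)"
    by (intro sum_mono) (auto simp: abs_mult adj_def Mge)
  also have "\<dots> = M * real (card {j. j < n \<and> E i j})"
    by (simp add: sum_distrib_left[symmetric] sum_adj mult.commute)
  also have "\<dots> \<le> M * D" using D[OF i(1)] Mp by simp
  finally have "\<bar>\<mu>\<bar> \<le> D" using Mp by simp
  thus ?thesis by simp
qed

definition GG :: "nat \<Rightarrow> nat \<Rightarrow> nat \<Rightarrow> nat \<Rightarrow> bool" where
  "GG a n i j = (i < n \<and> j < n \<and> i \<noteq> j \<and>
      (i mod a = j mod a \<or> (Suc i = j \<and> j < a) \<or> (Suc j = i \<and> i < a)))"

lemma GG_simple: "simple_graph n (GG a n)"
  unfolding simple_graph_def GG_def by auto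

lemma sym_rtranclp:
  assumes "\<And>x y. r x y \<Longrightarrow> r y x"
  shows "r\<^sup>*\<^sup>* x y \<Longrightarrow> r\<^sup>*\<^sup>* y x"
  by (induction rule: rtranclp_induct) (auto intro: converse_rtranclp_into_rtranclp assms)


lemma GG_conn:
  assumes a: "a \<ge> 1" and n: "n \<ge> 1"
  shows "graph_connected n (GG a n)"
proof -
  have chain: "r < a \<longrightarrow> r < n \<longrightarrow> (GG a n)\<^sup>*\<^sup>* 0 r" for r
  proof (induction r)
    case 0 show ?case by simp
  next
    case (Suc r)
    show ?case
    proof (intro impI)
      assume h: "Suc r < a" "Suc r < n"
      hence "(GG a n)\<^sup>*\<^sup>* 0 r" using Suc.IH by simp
      moreover have "GG a n r (Suc r)" unfolding GG_def using h by simp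
      ultimately show "(GG a n)\<^sup>*\<^sup>* 0 (Suc r)" by (rule rtranclp.rtrancl_into_rtrancl)
    qed
  qed
  have to0: "(GG a n)\<^sup>*\<^sup>* 0 i" if "i < n" for i
  proof -
    have m: "i mod a < a" using a by simp
    have "i mod a \<le> i" by simp
    hence mlt: "i mod a < n" using that by (rule le_less_trans)
    hence "(GG a n)\<^sup>*\<^sup>* 0 (i mod a)" using chain[of "i mod a"] m that by linarith
    moreover have "(GG a n)\<^sup>*\<^sup>* (i mod a) i"
    proof (cases "i mod a = i")
      case True thus ?thesis by simp
    next
      case False
      hence "GG a n (i mod a) i" unfolding GG_def using that mlt by simp
      thus ?thesis by simp
    qed
    ultimately show ?thesis by simp
  qed
  have symG: "\<And>x y. GG a n x y \<Longrightarrow> GG a n y x" unfolding GG_def by auto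
  have "(GG a n)\<^sup>*\<^sup>* i j" if "i < n" "j < n" for i j
  proof -
    have "(GG a n)\<^sup>*\<^sup>* i 0" using sym_rtranclp[OF symG to0[OF that(1)]] .
    thus ?thesis using to0[OF that(2)] by (rule rtranclp_trans)
  qed
  thus ?thesis unfolding graph_connected_def using n by blast
qed


lemma GG_indep:
  assumes a: "a \<ge> 1" and n: "n \<ge> 2 * a"
  shows "independence_number n (GG a n) = a"
proof -
  have fin: "finite {S. independent_set n (GG a n) S}"
  proof -
    have "{S. independent_set n (GG a n) S} \<subseteq> Pow {0..<n}" unfolding independent_set_def by auto
    thus ?thesis by (rule finite_subset) simp
  qed
  have le: "card S \<le> a" if "independent_set n (GG a n) S" for S
  proof -
    have Sn: "S \<subseteq> {0..<n}" and ni: "\<forall>i\<in>S. \<forall>j\<in>S. \<not> GG a n i j"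
      using that unfolding independent_set_def by auto
    have "inj_on (\<lambda>i. i mod a) S"
    proof (rule inj_onI)
      fix i j assume "i \<in> S" "j \<in> S" "i mod a = j mod a"
      show "i = j"
      proof (rule ccontr)
        assume "i \<noteq> j"
        moreover have "i < n" "j < n" using \<open>i \<in> S\<close> \<open>j \<in> S\<close> Sn by auto
        ultimately have "GG a n i j" unfolding GG_def using \<open>i mod a = j mod a\<close> by simp
        thus False using ni \<open>i \<in> S\<close> \<open>j \<in> S\<close> by blast
      qed
    qed
    hence "card S = card ((\<lambda>i. i mod a) ` S)" by (simp add: card_image)
    also have "\<dots> \<le> card {..<a}" using a by (intro card_mono) auto
    finally show ?thesis by simp
  qed
  have S0: "independent_set n (GG a n) {a..<2*a}"
    unfolding independent_set_def
  proof (intro conjI ballI)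
    show "{a..<2*a} \<subseteq> {0..<n}" using n by auto
  next
    fix i j assume i: "i \<in> {a..<2*a}" and j: "j \<in> {a..<2*a}"
    have "i - a < a" "a \<le> i" using i by auto
    hence "i mod a = i - a" by (metis le_mod_geq mod_less)
    moreover have "j - a < a" "a \<le> j" using j by auto
    hence "j mod a = j - a" by (metis le_mod_geq mod_less)
    ultimately show "\<not> GG a n i j" using i j unfolding GG_def by auto
  qed
  have "card {a..<2*a} = a" by simp
  show ?thesis unfolding independence_number_def
  proof (rule Max_eqI)
    show "finite (card ` {S. independent_set n (GG a n) S})" using fin by simp
    show "y \<le> a" if "y \<in> card ` {S. independent_set n (GG a n) S}" for y
      using that le by blast
    show "a \<in> card ` {S. independent_set n (GG a n) S}"
      using S0 \<open>card {a..<2*a} = a\<close> by (metis (mono_tags, lifting) image_eqI mem_Collect_eq)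
  qed
qed



lemma GG_deg:
  assumes a: "a \<ge> 1"
  shows "real (card {j. j < n \<and> GG a n i j}) \<le> real n / real a + 3"
proof -
  define A where "A = {j. j < n \<and> j mod a = i mod a}"
  have sub: "{j. j < n \<and> GG a n i j} \<subseteq> A \<union> {Suc i, i - 1}"
    unfolding A_def GG_def by auto
  have A_sub: "A \<subseteq> (\<lambda>q. q * a + i mod a) ` {..n div a}"
  proof
    fix j assume "j \<in> A"
    hence j: "j < n" "j mod a = i mod a" unfolding A_def by auto
    have "j = j div a * a + i mod a" using j(2) div_mult_mod_eq[of j a] by simp
    moreover have "j div a \<le> n div a" using j(1) by (intro div_le_mono) simp
    ultimately show "j \<in> (\<lambda>q. q * a + i mod a) ` {..n div a}" by blast
  qed
  have cA: "card A \<le> n div a + 1"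
  proof -
    have "card A \<le> card ((\<lambda>q. q * a + i mod a) ` {..n div a})"
      using A_sub by (intro card_mono) auto
    also have "\<dots> \<le> card {..n div a}" by (rule card_image_le) simp
    finally show ?thesis by simp
  qed
  have finA: "finite A" unfolding A_def by simp
  have "card {j. j < n \<and> GG a n i j} \<le> card (A \<union> {Suc i, i - 1})"
    using sub finA by (intro card_mono) auto
  also have "\<dots> \<le> card A + card {Suc i, i - 1}" by (rule card_Un_le)
  also have "card {Suc i, i - 1} \<le> 2" by (simp add: card_insert_le_m1)
  finally have c: "card {j. j < n \<and> GG a n i j} \<le> n div a + 3" using cA by linarith
  have "real (n div a) * real a \<le> real n"
    by (metis div_times_less_eq_dividend of_nat_le_iff of_nat_mult)
  hence "real (n div a) \<le> real n / real a" using a by (simp add: le_divide_eq)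
  moreover have "real (card {j. j < n \<and> GG a n i j}) \<le> real (n div a) + 3"
    using c by (metis of_nat_add of_nat_le_iff of_nat_numeral)
  ultimately show ?thesis by linarith
qed

lemma bounds:
  assumes a: "a \<ge> 1" and n: "n \<ge> 2 * a"
  shows "real n / real a - 1 \<le> lambda_min n a \<and> lambda_min n a \<le> real n / real a + 3"
proof -
  define X where "X = {spectral_radius_graph n E | E.
       simple_graph n E \<and> graph_connected n E \<and> independence_number n E = a}"
  have lb: "real n / real a - 1 \<le> x" if hx: "x \<in> X" for x
  proof -
    obtain E where E: "x = spectral_radius_graph n E" "simple_graph n E" "graph_connected n E"
      "independence_number n E = a" using hx unfolding X_def by blast
    have "n \<ge> 1" using E(3) unfolding graph_connected_def by simp
    thus ?thesis using lower[OF E(2) _ E(4) a] E(1) by simp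
  qed
  have n1: "n \<ge> 1" using a n by simp
  have GX: "spectral_radius_graph n (GG a n) \<in> X"
    unfolding X_def using GG_simple GG_conn[OF a n1] GG_indep[OF a n] by blast
  have Gub: "spectral_radius_graph n (GG a n) \<le> real n / real a + 3"
  proof -
    have "adj_eigenvalue n (GG a n) (spectral_radius_graph n (GG a n))"
      using spec_facts[OF GG_simple n1] by blast
    thus ?thesis by (rule eig_le_deg) (rule GG_deg[OF a])
  qed
  have bdd: "bdd_below X" using lb by (intro bdd_belowI) 
  have "lambda_min n a \<le> spectral_radius_graph n (GG a n)"
    unfolding lambda_min_def X_def[symmetric] by (rule cInf_lower[OF GX bdd])
  moreover have "real n / real a - 1 \<le> lambda_min n a"
    unfolding lambda_min_def X_def[symmetric] using GX lb by (intro cInf_greatest) auto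
  ultimately show ?thesis using Gub by simp
qed

theorem theorem1p1:
  fixes \<alpha> :: nat
  assumes "\<alpha> \<ge> 1"
  shows "(\<lambda>n. lambda_min n \<alpha> / real n) \<longlonglongrightarrow> 1 / real \<alpha>"
proof (rule real_tendsto_sandwich)
  show "eventually (\<lambda>n. 1 / real \<alpha> - 1 / real n \<le> lambda_min n \<alpha> / real n) sequentially"
    unfolding eventually_sequentially
  proof (intro exI allI impI)
    fix n assume n: "2 * \<alpha> \<le> n"
    have np: "real n > 0" using n assms by simp
    have "(real n / real \<alpha> - 1) / real n \<le> lambda_min n \<alpha> / real n"
      using bounds[OF assms n] np by (intro divide_right_mono) auto
    moreover have "(real n / real \<alpha> - 1) / real n = 1 / real \<alpha> - 1 / real n"
      using np by (simp add: field_simps)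
    ultimately show "1 / real \<alpha> - 1 / real n \<le> lambda_min n \<alpha> / real n" by simp
  qed
  show "eventually (\<lambda>n. lambda_min n \<alpha> / real n \<le> 1 / real \<alpha> + 3 / real n) sequentially"
    unfolding eventually_sequentially
  proof (intro exI allI impI)
    fix n assume n: "2 * \<alpha> \<le> n"
    have np: "real n > 0" using n assms by simp
    have "lambda_min n \<alpha> / real n \<le> (real n / real \<alpha> + 3) / real n"
      using bounds[OF assms n] np by (intro divide_right_mono) auto
    moreover have "(real n / real \<alpha> + 3) / real n = 1 / real \<alpha> + 3 / real n"
      using np by (simp add: field_simps)
    ultimately show "lambda_min n \<alpha> / real n \<le> 1 / real \<alpha> + 3 / real n" by simp
  qed
  show "(\<lambda>n. 1 / real \<alpha> - 1 / real n) \<longlonglongrightarrow> 1 / real \<alpha>"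
    using tendsto_diff[OF tendsto_const lim_const_over_n, of "1 / real \<alpha>" 1] by simp
  show "(\<lambda>n. 1 / real \<alpha> + 3 / real n) \<longlonglongrightarrow> 1 / real \<alpha>"
    using tendsto_add[OF tendsto_const lim_const_over_n, of "1 / real \<alpha>" 3] by simp
qed

end
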